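(* Let $n\ge d\ge 2$ and let $\mathcal{C}_{n,d}$ be the complete $d$-uniform clutter on $[n]$. Then $\mathcal{C}_{n,d}$ is chordal and its $\lambda$-sequence is \[ \lambda_i(\mathcal{C}_{n,d})=\begin{cases}\binom{n-1-i}{d-2}, & i=1,\ldots,n-d+1,\\ 0, & \text{otherwise.}\end{cases} \]
   Context: $\mathcal{C}_{n,d}$ is the set of all $d$-subsets of $[n]$. For a $d$-uniform clutter $\mathcal{C}$ (set of $d$-subsets of $[n]$): a submaximal circuit is a $(d-1)$-set contained in some circuit; a clique is a set all of whose $d$-subsets are in $\mathcal{C}$; $\mathrm{N}_{\mathcal{C}}(e)=\{c: e\cup\{c\}\in\mathcal{C}\}$, $\mathrm{N}_{\mathcal{C}}[e]=e\cup\mathrm{N}_{\mathcal{C}}(e)$; $e$ is simplicial if it is a submaximal circuit and $\mathrm{N}_{\mathcal{C}}[e]$ is a clique. $\mathcal{C}\setminus e=\{F\in\mathcal{C}:e\not\subset F\}$; $\mathcal{C}_{e_1\cdots e_i}$ is successive deletion. A simplicial order is a sequence $e_1,\ldots,e_r$ with $e_i$ simplicial in $\mathcal{C}_{e_1\cdots e_{i-1}}$ (in $\mathcal{C}$ for $i=1$) and $\mathcal{C}_{e_1\cdots e_r}=\emptyset$; $\mathcal{C}$ is chordal if one exists. Its multiset is $\{N_1,\ldots,N_r\}$, $N_i=|\mathrm{N}_{\mathcal{C}_{e_1\cdots e_{i-1}}}(e_i)|$ (independent of the order), and $\lambda_i(\mathcal{C})=|\{j:N_j=i\}|$. *)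

theory Defs
  imports Main
begin

definition complete_clutter :: "nat \<Rightarrow> nat \<Rightarrow> nat set set" where
  "complete_clutter n d = {F. F \<subseteq> {1..n} \<and> card F = d}"

definition submaximal_circuit :: "nat \<Rightarrow> nat set set \<Rightarrow> nat set \<Rightarrow> bool" where
  "submaximal_circuit d C e \<longleftrightarrow> finite e \<and> card e = d - 1 \<and> (\<exists>F\<in>C. e \<subseteq> F)"

definition is_clique :: "nat \<Rightarrow> nat set set \<Rightarrow> nat set \<Rightarrow> bool" where
  "is_clique d C S \<longleftrightarrow> (\<forall>F. F \<subseteq> S \<and> finite F \<and> card F = d \<longrightarrow> F \<in> C)"

definition nbhd :: "nat set set \<Rightarrow> nat set \<Rightarrow> nat set" where
  "nbhd C e = {c. e \<union> {c} \<in> C}"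

definition closed_nbhd :: "nat set set \<Rightarrow> nat set \<Rightarrow> nat set" where
  "closed_nbhd C e = e \<union> nbhd C e"

definition simplicial :: "nat \<Rightarrow> nat set set \<Rightarrow> nat set \<Rightarrow> bool" where
  "simplicial d C e \<longleftrightarrow> submaximal_circuit d C e \<and> is_clique d C (closed_nbhd C e)"

definition del :: "nat set set \<Rightarrow> nat set \<Rightarrow> nat set set" where
  "del C e = {F\<in>C. \<not> e \<subseteq> F}"

definition dels :: "nat set set \<Rightarrow> nat set list \<Rightarrow> nat set set" where
  "dels C es = foldl del C es"

definition simplicial_order :: "nat \<Rightarrow> nat set set \<Rightarrow> nat set list \<Rightarrow> bool" where
  "simplicial_order d C es \<longleftrightarrow>
     (\<forall>i < length es. simplicial d (dels C (take i es)) (es ! i)) \<and> dels C es = {}"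

definition chordal :: "nat \<Rightarrow> nat set set \<Rightarrow> bool" where
  "chordal d C \<longleftrightarrow> (\<exists>es. simplicial_order d C es)"

text \<open>N_j of the order (0-indexed j), and lambda_i with respect to the order.\<close>
definition order_N :: "nat set set \<Rightarrow> nat set list \<Rightarrow> nat \<Rightarrow> nat" where
  "order_N C es j = card (nbhd (dels C (take j es)) (es ! j))"

definition lambda_seq :: "nat set set \<Rightarrow> nat set list \<Rightarrow> nat \<Rightarrow> nat" where
  "lambda_seq C es i = card {j. j < length es \<and> order_N C es j = i}"

end

theory Submission imports Defs begin

lemma upper_vdm: "(\<Sum>k\<le>N. (k choose a) * ((N - k) choose b)) = Suc N choose (a + b + 1)"
proof (induction N arbitrary: b)
  case 0
  then show ?case by (cases a; cases b) auto
next
  case (Suc N)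
  show ?case
  proof (cases b)
    case 0
    then show ?thesis using sum_choose_upper[where n="Suc N" and m=a] by simp
  next
    case (Suc b')
    have "(\<Sum>k\<le>Suc N. (k choose a) * ((Suc N - k) choose b))
        = (\<Sum>k\<le>N. (k choose a) * ((Suc N - k) choose b))" using Suc by simp
    also have "\<dots> = (\<Sum>k\<le>N. (k choose a) * ((N - k) choose b') + (k choose a) * ((N - k) choose b))"
      by (rule sum.cong) (auto simp: Suc Suc_diff_le algebra_simps)
    also have "\<dots> = (Suc N choose (a + b' + 1)) + (Suc N choose (a + b + 1))"
      using Suc.IH[of b'] Suc.IH[of b] by (simp add: sum.distrib)
    also have "\<dots> = Suc (Suc N) choose (a + b + 1)" using Suc by simp
    finally show ?thesis .
  qed
qed

lemma uniq:
  fixes l u :: "nat \<Rightarrow> nat"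
  assumes "\<And>t. t \<in> {1..n} \<Longrightarrow> (\<Sum>i\<in>{1..n}. l i * (i choose t)) = (\<Sum>i\<in>{1..n}. u i * (i choose t))"
  shows "\<forall>i\<in>{1..n}. l i = u i"
proof (rule ccontr)
  assume nt: "\<not> (\<forall>i\<in>{1..n}. l i = u i)"
  define B where "B = {i\<in>{1..n}. l i \<noteq> u i}"
  have B: "B \<noteq> {}" "finite B" using nt by (auto simp: B_def)
  define t where "t = Max B"
  have tB: "t \<in> B" using B by (simp add: t_def)
  have tmax: "\<And>i. i \<in> B \<Longrightarrow> i \<le> t" using B by (simp add: t_def)
  have tn: "t \<in> {1..n}" using tB by (simp add: B_def)
  have eq: "(\<Sum>i\<in>{1..n}-{t}. l i * (i choose t)) = (\<Sum>i\<in>{1..n}-{t}. u i * (i choose t))"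
  proof (rule sum.cong)
    fix i assume i: "i \<in> {1..n}-{t}"
    show "l i * (i choose t) = u i * (i choose t)"
    proof (cases "i < t")
      case True then show ?thesis by simp
    next
      case False
      then have "i \<notin> B" using tmax i by force
      then show ?thesis using i by (simp add: B_def)
    qed
  qed simp
  have "l t + (\<Sum>i\<in>{1..n}-{t}. l i * (i choose t)) = u t + (\<Sum>i\<in>{1..n}-{t}. u i * (i choose t))"
    using assms[OF tn] sum.remove[of "{1..n}" t "\<lambda>i. l i * (i choose t)"]
      sum.remove[of "{1..n}" t "\<lambda>i. u i * (i choose t)"] tn by simp
  then have "l t = u t" using eq by simp
  then show False using tB by (simp add: B_def)
qed

lemma mu_sum:
  fixes n d t :: nat
  assumes "2 \<le> d" "d \<le> n" "1 \<le> t"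
  shows "(\<Sum>i\<in>{1..n}. (if 1 \<le> i \<and> i \<le> n - d + 1 then (n - 1 - i) choose (d - 2) else 0) * (i choose t))
     = n choose (d - 1 + t)"
proof -
  have "(\<Sum>i\<in>{1..n}. (if 1 \<le> i \<and> i \<le> n - d + 1 then (n - 1 - i) choose (d - 2) else 0) * (i choose t))
     = (\<Sum>i\<in>{1..n}. (if i < n then (i choose t) * ((n - 1 - i) choose (d - 2)) else 0))"
  proof (rule sum.cong)
    fix i assume i: "i \<in> {1..n}"
    show "(if 1 \<le> i \<and> i \<le> n - d + 1 then (n - 1 - i) choose (d - 2) else 0) * (i choose t) =
          (if i < n then (i choose t) * ((n - 1 - i) choose (d - 2)) else 0)"
    proof (cases "i \<le> n - d + 1")
      case True then show ?thesis using i assms by auto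
    next
      case False
      then have "i < n \<Longrightarrow> n - 1 - i < d - 2" using assms by linarith
      then show ?thesis using i False by auto
    qed
  qed simp
  also have "\<dots> = (\<Sum>i\<le>n - 1. (i choose t) * ((n - 1 - i) choose (d - 2)))"
  proof -
    have "(\<Sum>i\<in>{1..n}. (if i < n then (i choose t) * ((n - 1 - i) choose (d - 2)) else 0))
        = (\<Sum>i\<in>{1..n-1}. (i choose t) * ((n - 1 - i) choose (d - 2)))"
      by (rule sum.mono_neutral_cong_right) (use assms in auto)
    also have "\<dots> = (\<Sum>i\<le>n - 1. (i choose t) * ((n - 1 - i) choose (d - 2)))"
      by (rule sum.mono_neutral_cong_left) (use assms in auto)
    finally show ?thesis .
  qed
  also have "\<dots> = Suc (n - 1) choose (t + (d - 2) + 1)" by (rule upper_vdm)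
  also have "\<dots> = n choose (d - 1 + t)"
  proof -
    have "t + (d - 2) + 1 = d - 1 + t" "Suc (n - 1) = n" using assms by auto
    then show ?thesis by metis
  qed
  finally show ?thesis .
qed


lemma dels_Cons: "dels C (e#es) = dels (del C e) es"
  by (simp add: dels_def)

lemma dels_Nil: "dels C [] = C"
  by (simp add: dels_def)

lemma dels_eq: "dels C es = {F\<in>C. \<forall>e\<in>set es. \<not> e \<subseteq> F}"
  by (induction es arbitrary: C) (auto simp: dels_Cons dels_Nil del_def)

lemma simplicial_order_Cons:
  "simplicial_order d C (e#es) \<longleftrightarrow> simplicial d C e \<and> simplicial_order d (del C e) es"
  unfolding simplicial_order_def
  by (simp add: All_less_Suc2 dels_Cons dels_Nil)

lemma order_N_Cons0: "order_N C (e#es) 0 = card (nbhd C e)"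
  by (simp add: order_N_def dels_Nil)

lemma order_N_Cons_Suc: "order_N C (e#es) (Suc j) = order_N (del C e) es j"
  by (simp add: order_N_def dels_Cons)

definition cliques :: "nat \<Rightarrow> nat set set \<Rightarrow> nat \<Rightarrow> nat set set" where
  "cliques d C m = {K. finite K \<and> card K = m \<and> is_clique d C K}"

lemma clique_sub:
  assumes "C \<subseteq> complete_clutter n d" "1 \<le> d" "d \<le> card K" "finite K" "is_clique d C K"
  shows "K \<subseteq> {1..n}"
proof
  fix x assume x: "x \<in> K"
  have "d - 1 \<le> card (K - {x})" using x assms by simp
  then obtain T where T: "T \<subseteq> K - {x}" "card T = d - 1" "finite T"
    by (rule obtain_subset_with_card_n)
  have xT: "x \<notin> T" using T by auto
  have "insert x T \<subseteq> K" "finite (insert x T)" "card (insert x T) = d"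
    using T x assms(2) xT by auto
  then have "insert x T \<in> C" using assms(5) by (simp add: is_clique_def)
  then show "x \<in> {1..n}" using assms(1) by (auto simp: complete_clutter_def)
qed

lemma cliques_finite:
  assumes "C \<subseteq> complete_clutter n d" "1 \<le> d" "d \<le> m"
  shows "finite (cliques d C m)"
proof -
  have "cliques d C m \<subseteq> Pow {1..n}"
    using clique_sub[OF assms(1,2)] assms(3) by (auto simp: cliques_def)
  then show ?thesis by (rule finite_subset) simp
qed

lemma cliques_empty:
  assumes "d \<le> m"
  shows "cliques d {} m = {}"
proof -
  { fix K assume K: "finite K" "card K = m" "is_clique d {} K"
    obtain F where "F \<subseteq> K" "card F = d" "finite F"
      using obtain_subset_with_card_n[of d K] K assms by auto
    then have False using K(3) by (auto simp: is_clique_def) }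
  then show ?thesis by (auto simp: cliques_def)
qed

lemma cliques_C0:
  assumes "1 \<le> d" "d \<le> m"
  shows "card (cliques d (complete_clutter n d) m) = n choose m"
proof -
  have "cliques d (complete_clutter n d) m = {K. K \<subseteq> {1..n} \<and> card K = m}"
  proof
    show "cliques d (complete_clutter n d) m \<subseteq> {K. K \<subseteq> {1..n} \<and> card K = m}"
      using clique_sub[of "complete_clutter n d" n d] assms by (auto simp: cliques_def)
    show "{K. K \<subseteq> {1..n} \<and> card K = m} \<subseteq> cliques d (complete_clutter n d) m"
      by (auto simp: cliques_def is_clique_def complete_clutter_def intro: finite_subset)
  qed
  then show ?thesis using n_subsets[of "{1..n}" m] by simp
qed

lemma nbhd_sub:
  assumes "C \<subseteq> complete_clutter n d"
  shows "nbhd C e \<subseteq> {1..n}"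
  using assms by (auto simp: nbhd_def complete_clutter_def)

lemma nbhd_disj:
  assumes "C \<subseteq> complete_clutter n d" "card e = d - 1" "1 \<le> d"
  shows "e \<inter> nbhd C e = {}"
proof -
  { fix c assume "c \<in> e" "c \<in> nbhd C e"
    then have "e \<in> C" by (simp add: nbhd_def insert_absorb)
    then have "card e = d" using assms(1) by (auto simp: complete_clutter_def)
    then have False using assms by simp }
  then show ?thesis by blast
qed

lemma del_step:
  assumes C: "C \<subseteq> complete_clutter n d" and d: "2 \<le> d" and s: "simplicial d C e" and m: "d \<le> m"
  shows "card (cliques d C m) = card (cliques d (del C e) m) + (card (nbhd C e) choose (m - d + 1))"
proof -
  have fe: "finite e" and ce: "card e = d - 1" and cl: "is_clique d C (closed_nbhd C e)"
    using s by (auto simp: simplicial_def submaximal_circuit_def)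
  define A where "A = cliques d C m"
  have fA: "finite A" unfolding A_def using cliques_finite[OF C] d m by simp
  have dis: "e \<inter> nbhd C e = {}" using nbhd_disj[OF C ce] d by simp
  have fN: "finite (nbhd C e)" using nbhd_sub[OF C] finite_subset by blast
  have h1: "cliques d (del C e) m = {K\<in>A. \<not> e \<subseteq> K}"
  proof
    show "cliques d (del C e) m \<subseteq> {K\<in>A. \<not> e \<subseteq> K}"
    proof
      fix K assume K: "K \<in> cliques d (del C e) m"
      then have K': "finite K" "card K = m" "is_clique d (del C e) K" by (auto simp: cliques_def)
      have "is_clique d C K" using K'(3) by (auto simp: is_clique_def del_def)
      moreover have "\<not> e \<subseteq> K"
      proof
        assume eK: "e \<subseteq> K"
        have "card e < card K" using ce K' m d by simp
        then have "e \<noteq> K" by auto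
        then obtain x where x: "x \<in> K" "x \<notin> e" using eK by blast
        have "insert x e \<subseteq> K" "finite (insert x e)" "card (insert x e) = d"
          using x eK fe ce d by auto
        then have "insert x e \<in> del C e" using K'(3) by (simp add: is_clique_def)
        then show False by (auto simp: del_def)
      qed
      ultimately show "K \<in> {K\<in>A. \<not> e \<subseteq> K}" using K' by (simp add: A_def cliques_def)
    qed
    show "{K\<in>A. \<not> e \<subseteq> K} \<subseteq> cliques d (del C e) m"
      by (auto simp: A_def cliques_def is_clique_def del_def)
  qed
  define S where "S = {T. T \<subseteq> nbhd C e \<and> card T = m - d + 1}"
  have h2: "{K\<in>A. e \<subseteq> K} = (\<lambda>T. e \<union> T) ` S"
  proof
    show "{K\<in>A. e \<subseteq> K} \<subseteq> (\<lambda>T. e \<union> T) ` S"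
    proof
      fix K assume K: "K \<in> {K\<in>A. e \<subseteq> K}"
      then have K': "finite K" "card K = m" "is_clique d C K" "e \<subseteq> K"
        by (auto simp: A_def cliques_def)
      have "K - e \<subseteq> nbhd C e"
      proof
        fix c assume c: "c \<in> K - e"
        have "e \<union> {c} \<subseteq> K" "finite (e \<union> {c})" "card (e \<union> {c}) = d"
          using c K' fe ce d by auto
        then show "c \<in> nbhd C e" using K'(3) by (simp add: is_clique_def nbhd_def)
      qed
      moreover have "card (K - e) = m - d + 1"
        using K' fe ce d m by (simp add: card_Diff_subset)
      moreover have "K = e \<union> (K - e)" using K' by blast
      ultimately show "K \<in> (\<lambda>T. e \<union> T) ` S" unfolding S_def by blast
    qed
    show "(\<lambda>T. e \<union> T) ` S \<subseteq> {K\<in>A. e \<subseteq> K}"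
    proof
      fix K assume "K \<in> (\<lambda>T. e \<union> T) ` S"
      then obtain T where T: "T \<subseteq> nbhd C e" "card T = m - d + 1" "K = e \<union> T"
        by (auto simp: S_def)
      have fT: "finite T" using T fN finite_subset by blast
      have "e \<inter> T = {}" using dis T by blast
      then have "card K = m" using T fT fe ce d m by (simp add: card_Un_disjoint)
      moreover have "is_clique d C K"
        using cl T unfolding is_clique_def closed_nbhd_def by blast
      ultimately show "K \<in> {K\<in>A. e \<subseteq> K}" using T fT fe by (simp add: A_def cliques_def)
    qed
  qed
  have inj: "inj_on (\<lambda>T. e \<union> T) S"
  proof (rule inj_onI)
    fix T T' assume "T \<in> S" "T' \<in> S" "e \<union> T = e \<union> T'"
    then show "T = T'" using dis unfolding S_def by blast
  qed
  have cS: "card S = card (nbhd C e) choose (m - d + 1)"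
    unfolding S_def by (rule n_subsets[OF fN])
  have "card A = card {K\<in>A. e \<subseteq> K} + card {K\<in>A. \<not> e \<subseteq> K}"
  proof -
    have "A = {K\<in>A. e \<subseteq> K} \<union> {K\<in>A. \<not> e \<subseteq> K}" by blast
    then have "card A = card ({K\<in>A. e \<subseteq> K} \<union> {K\<in>A. \<not> e \<subseteq> K})" by simp
    also have "\<dots> = card {K\<in>A. e \<subseteq> K} + card {K\<in>A. \<not> e \<subseteq> K}"
      by (rule card_Un_disjoint) (use fA in auto)
    finally show ?thesis .
  qed
  then show ?thesis using h1 h2 inj cS card_image[OF inj] by (simp add: A_def)
qed

lemma del_sub: "C \<subseteq> X \<Longrightarrow> del C e \<subseteq> X"
  by (auto simp: del_def)

lemma sum_formula:
  assumes "C \<subseteq> complete_clutter n d" "2 \<le> d" "d \<le> m" "simplicial_order d C es"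
  shows "card (cliques d C m) = (\<Sum>j<length es. order_N C es j choose (m - d + 1))"
  using assms
proof (induction es arbitrary: C)
  case Nil
  then have "C = {}" by (simp add: simplicial_order_def dels_Nil)
  then show ?case using cliques_empty[OF Nil(3)] by simp
next
  case (Cons e es)
  have s: "simplicial d C e" "simplicial_order d (del C e) es"
    using Cons(5) by (simp_all add: simplicial_order_Cons)
  have IH: "card (cliques d (del C e) m) = (\<Sum>j<length es. order_N (del C e) es j choose (m - d + 1))"
    using Cons.IH[OF del_sub[OF Cons(2)] Cons(3) Cons(4) s(2)] .
  show ?case
    using del_step[OF Cons(2) Cons(3) s(1) Cons(4)] IH
    by (simp add: sum.lessThan_Suc_shift order_N_Cons0 order_N_Cons_Suc del: sum.lessThan_Suc)
qed

lemma N_bounds: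
  assumes C: "C \<subseteq> complete_clutter n d" and d: "1 \<le> d" and s: "submaximal_circuit d C e"
  shows "1 \<le> card (nbhd C e) \<and> card (nbhd C e) \<le> n"
proof -
  have fN: "finite (nbhd C e)" using nbhd_sub[OF C] finite_subset by blast
  obtain F where F: "F \<in> C" "e \<subseteq> F" and fe: "finite e" and ce: "card e = d - 1"
    using s by (auto simp: submaximal_circuit_def)
  have "F \<subseteq> {1..n}" "card F = d" using F C by (auto simp: complete_clutter_def)
  then have fF: "finite F" "card F = d" using finite_subset by auto
  then have "e \<noteq> F" using ce d by auto
  then obtain x where x: "x \<in> F" "x \<notin> e" using F by blast
  have "insert x e \<subseteq> F" "card (insert x e) = card F" using x F fe ce fF d by auto
  then have "insert x e = F" using fF by (metis card_subset_eq)
  then have "x \<in> nbhd C e" using F by (simp add: nbhd_def)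
  then have "1 \<le> card (nbhd C e)" using fN by (metis One_nat_def Suc_leI card_gt_0_iff empty_iff)
  moreover have "card (nbhd C e) \<le> n" using card_mono[OF _ nbhd_sub[OF C]] by simp
  ultimately show ?thesis by simp
qed


definition RR :: "nat \<Rightarrow> nat \<Rightarrow> nat set set" where
  "RR n d = {e. e \<subseteq> {2..n} \<and> card e = d - 1}"

definition SS :: "nat \<Rightarrow> nat \<Rightarrow> nat set set \<Rightarrow> nat set set" where
  "SS n d X = {F \<in> complete_clutter n d. \<forall>e\<in>X. \<not> e \<subseteq> F}"

lemma SS_insert: "SS n d (insert y X) = del (SS n d X) y"
  by (auto simp: SS_def del_def)

lemma SS_R_empty:
  assumes "2 \<le> d"
  shows "SS n d (RR n d) = {}"
proof -
  { fix F assume F: "F \<in> complete_clutter n d" "\<forall>e\<in>RR n d. \<not> e \<subseteq> F"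
    have Fs: "F \<subseteq> {1..n}" "card F = d" using F by (auto simp: complete_clutter_def)
    have fF: "finite F" using Fs finite_subset by auto
    have Fne: "F \<noteq> {}" using Fs assms by auto
    define e where "e = F - {Min F}"
    have "Min F \<in> F" using fF Fne by simp
    then have ce: "card e = d - 1" using Fs fF by (simp add: e_def)
    have "e \<subseteq> {2..n}"
    proof
      fix x assume x: "x \<in> e"
      then have "x \<in> F" "x \<noteq> Min F" by (auto simp: e_def)
      moreover have "Min F \<le> x" using \<open>x \<in> F\<close> fF by simp
      moreover have "1 \<le> Min F" using \<open>Min F \<in> F\<close> Fs by auto
      ultimately show "x \<in> {2..n}" using Fs by fastforce
    qed
    then have "e \<in> RR n d" using ce by (simp add: RR_def)
    moreover have "e \<subseteq> F" by (auto simp: e_def)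
    ultimately have False using F by blast }
  then show ?thesis by (auto simp: SS_def)
qed

lemma simp_step:
  assumes d: "2 \<le> d" "d \<le> n" and Y: "Y \<subseteq> RR n d"
    and inv: "\<forall>y\<in>Y. \<forall>e\<in>RR n d - Y. Min y \<le> Min e"
    and y: "y \<in> Y" and ymax: "\<forall>y'\<in>Y. Min y' \<le> Min y"
  shows "simplicial d (SS n d (RR n d - Y)) y"
proof -
  let ?X = "RR n d - Y"
  let ?C = "SS n d ?X"
  have yR: "y \<subseteq> {2..n}" "card y = d - 1" using y Y by (auto simp: RR_def)
  have fy: "finite y" using yR finite_subset by auto
  have yne: "y \<noteq> {}" using yR d by auto
  define m where "m = Min y"
  have my: "m \<in> y" using fy yne by (simp add: m_def)
  have mle: "\<And>x. x \<in> y \<Longrightarrow> m \<le> x" using fy by (simp add: m_def)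
  have m2: "2 \<le> m" using my yR by auto
  have CC: "?C \<subseteq> complete_clutter n d" by (auto simp: SS_def)
  have eqy: "\<And>e. e \<in> RR n d \<Longrightarrow> e \<subseteq> y \<Longrightarrow> e = y"
  proof -
    fix e assume "e \<in> RR n d" "e \<subseteq> y"
    then show "e = y" using yR card_subset_eq[OF fy] by (auto simp: RR_def)
  qed
  have sub: "submaximal_circuit d ?C y"
  proof -
    have "1 \<notin> y" using yR by auto
    then have "insert 1 y \<in> complete_clutter n d"
      using yR fy d by (auto simp: complete_clutter_def)
    moreover have "\<forall>e\<in>?X. \<not> e \<subseteq> insert 1 y"
    proof (intro ballI notI)
      fix e assume e: "e \<in> ?X" "e \<subseteq> insert 1 y"
      then have "1 \<notin> e" by (auto simp: RR_def)
      then have "e \<subseteq> y" using e by auto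
      then have "e = y" using eqy e by auto
      then show False using e y by auto
    qed
    ultimately have "insert 1 y \<in> ?C" by (simp add: SS_def)
    then show ?thesis using fy yR by (auto simp: submaximal_circuit_def)
  qed
  have nb: "\<And>c. c \<in> nbhd ?C y \<Longrightarrow> m \<le> c \<Longrightarrow> c \<in> y"
  proof (rule ccontr)
    fix c assume c: "c \<in> nbhd ?C y" "m \<le> c" "c \<notin> y"
    have "c \<noteq> m" using c my by auto
    then have cm: "m < c" using c(2) by simp
    have cn: "c \<in> {1..n}" using nbhd_sub[OF CC, of y] c(1) by blast
    define e' where "e' = insert c y - {m}"
    have ce': "card e' = d - 1" using c my fy yR by (simp add: e'_def)
    have e'R: "e' \<in> RR n d" using ce' yR cn cm m2 by (auto simp: RR_def e'_def)
    have "c \<in> e'" using cm by (simp add: e'_def)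
    have fe': "finite e'" using fy by (simp add: e'_def)
    have "\<forall>x\<in>e'. m < x"
    proof
      fix x assume "x \<in> e'"
      then have "x = c \<or> (x \<in> y \<and> x \<noteq> m)" by (auto simp: e'_def)
      then show "m < x" using cm mle[of x] by auto
    qed
    moreover have "Min e' \<in> e'" using fe' \<open>c \<in> e'\<close> by (intro Min_in) auto
    ultimately have "m < Min e'" by blast
    then have "e' \<notin> Y" using ymax unfolding m_def by (meson not_le)
    then have "e' \<in> ?X" using e'R by simp
    moreover have "y \<union> {c} \<in> ?C" using c(1) by (simp add: nbhd_def)
    moreover have "e' \<subseteq> y \<union> {c}" by (auto simp: e'_def)
    ultimately show False by (auto simp: SS_def)
  qed
  have cl: "is_clique d ?C (closed_nbhd ?C y)"
    unfolding is_clique_def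
  proof (intro allI impI)
    fix T assume T: "T \<subseteq> closed_nbhd ?C y \<and> finite T \<and> card T = d"
    have "y \<subseteq> {1..n}" using yR by auto
    then have "T \<subseteq> {1..n}" using T nbhd_sub[OF CC, of y] unfolding closed_nbhd_def by blast
    then have "T \<in> complete_clutter n d" using T by (simp add: complete_clutter_def)
    moreover have "\<forall>e\<in>?X. \<not> e \<subseteq> T"
    proof (intro ballI notI)
      fix e assume e: "e \<in> ?X" "e \<subseteq> T"
      have "e \<subseteq> y"
      proof
        fix x assume x: "x \<in> e"
        have fe: "finite e" using e(1) by (auto simp: RR_def intro: finite_subset)
        have "Min e \<le> x" using fe x by simp
        moreover have "Min y \<le> Min e" using inv y e(1) by blast
        ultimately have "m \<le> x" by (simp add: m_def)
        moreover have "x \<in> y \<union> nbhd ?C y" using x e T by (auto simp: closed_nbhd_def)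
        ultimately show "x \<in> y" using nb by blast
      qed
      then have "e = y" using eqy e by auto
      then show False using e y by auto
    qed
    ultimately show "T \<in> ?C" by (simp add: SS_def)
  qed
  show ?thesis using sub cl by (simp add: simplicial_def)
qed

lemma exist_order:
  assumes d: "2 \<le> d" "d \<le> n"
  shows "Y \<subseteq> RR n d \<Longrightarrow> \<forall>y\<in>Y. \<forall>e\<in>RR n d - Y. Min y \<le> Min e
    \<Longrightarrow> \<exists>es. simplicial_order d (SS n d (RR n d - Y)) es"
proof (induction "card Y" arbitrary: Y)
  case 0
  have "finite (RR n d)"
    by (rule finite_subset[of _ "Pow {2..n}"]) (auto simp: RR_def)
  then have "finite Y" using 0 finite_subset by auto
  then have "Y = {}" using 0 by simp
  then have "SS n d (RR n d - Y) = {}" using SS_R_empty[OF d(1)] by simp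
  then show ?case by (intro exI[of _ "[]"]) (simp add: simplicial_order_def dels_Nil)
next
  case (Suc k)
  have "finite (RR n d)"
    by (rule finite_subset[of _ "Pow {2..n}"]) (auto simp: RR_def)
  then have fY: "finite Y" using Suc(3) finite_subset by blast
  then have Yne: "Y \<noteq> {}" using Suc by auto
  define M where "M = Max (Min ` Y)"
  have "M \<in> Min ` Y" using fY Yne by (simp add: M_def)
  then obtain y where y: "y \<in> Y" "Min y = M" by auto
  have ymax: "\<forall>y'\<in>Y. Min y' \<le> Min y" using fY y by (simp add: M_def)
  have st: "simplicial d (SS n d (RR n d - Y)) y"
    by (rule simp_step[OF d Suc(3) Suc(4) y(1) ymax])
  have eq: "RR n d - (Y - {y}) = insert y (RR n d - Y)" using y Suc(3) by auto
  have "\<exists>es. simplicial_order d (SS n d (RR n d - (Y - {y}))) es"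
  proof (rule Suc(1))
    show "k = card (Y - {y})" using Suc(2) y fY by simp
    show "Y - {y} \<subseteq> RR n d" using Suc(3) by auto
    show "\<forall>ya\<in>Y - {y}. \<forall>e\<in>RR n d - (Y - {y}). Min ya \<le> Min e"
      using Suc(4) ymax eq by auto
  qed
  then obtain es where "simplicial_order d (SS n d (RR n d - (Y - {y}))) es" by blast
  then have "simplicial_order d (SS n d (RR n d - Y)) (y # es)"
    using st eq by (simp add: simplicial_order_Cons SS_insert)
  then show ?case by blast
qed

theorem proposition4p7:
  fixes n d :: nat
  assumes "2 \<le> d" and "d \<le> n"
  shows "chordal d (complete_clutter n d) \<and>
    (\<forall>es. simplicial_order d (complete_clutter n d) es \<longrightarrow>
      (\<forall>i. lambda_seq (complete_clutter n d) es i =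
             (if 1 \<le> i \<and> i \<le> n - d + 1 then (n - 1 - i) choose (d - 2) else 0)))"
proof
  have "\<exists>es. simplicial_order d (SS n d (RR n d - RR n d)) es"
    by (rule exist_order[OF assms]) auto
  moreover have "SS n d (RR n d - RR n d) = complete_clutter n d" by (simp add: SS_def)
  ultimately show "chordal d (complete_clutter n d)" by (simp add: chordal_def)
next
  let ?C = "complete_clutter n d"
  let ?mu = "\<lambda>i. if 1 \<le> i \<and> i \<le> n - d + 1 then (n - 1 - i) choose (d - 2) else 0"
  show "\<forall>es. simplicial_order d ?C es \<longrightarrow> (\<forall>i. lambda_seq ?C es i = ?mu i)"
  proof (intro allI impI)
    fix es i assume so: "simplicial_order d ?C es"
    let ?N = "order_N ?C es"
    let ?L = "length es"
    have Nb: "\<And>j. j < ?L \<Longrightarrow> ?N j \<in> {1..n}"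
    proof -
      fix j assume j: "j < ?L"
      have "simplicial d (dels ?C (take j es)) (es ! j)" using so j by (simp add: simplicial_order_def)
      then have "submaximal_circuit d (dels ?C (take j es)) (es ! j)" by (simp add: simplicial_def)
      moreover have "dels ?C (take j es) \<subseteq> ?C" by (auto simp: dels_eq)
      ultimately show "?N j \<in> {1..n}" using N_bounds[of "dels ?C (take j es)" n d "es ! j"] assms
        by (simp add: order_N_def)
    qed
    have lam: "\<And>i. lambda_seq ?C es i = card {j\<in>{..<?L}. ?N j = i}"
      by (simp add: lambda_seq_def)
    have key: "\<And>t. 1 \<le> t \<Longrightarrow> (\<Sum>i\<in>{1..n}. lambda_seq ?C es i * (i choose t)) = n choose (d - 1 + t)"
    proof -
      fix t :: nat assume t: "1 \<le> t"
      have "n choose (d - 1 + t) = card (cliques d ?C (d - 1 + t))"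
        using cliques_C0[of d "d - 1 + t" n] assms t by simp
      also have "\<dots> = (\<Sum>j<?L. ?N j choose t)"
        using sum_formula[of ?C n d "d - 1 + t" es] so assms t by simp
      also have "\<dots> = (\<Sum>i\<in>?N ` {..<?L}. \<Sum>j\<in>{j\<in>{..<?L}. ?N j = i}. ?N j choose t)"
        by (rule sum.image_gen) simp
      also have "\<dots> = (\<Sum>i\<in>?N ` {..<?L}. card {j\<in>{..<?L}. ?N j = i} * (i choose t))"
        by (auto intro: sum.cong)
      also have "\<dots> = (\<Sum>i\<in>{1..n}. card {j\<in>{..<?L}. ?N j = i} * (i choose t))"
        by (rule sum.mono_neutral_left) (use Nb in auto)
      finally show "(\<Sum>i\<in>{1..n}. lambda_seq ?C es i * (i choose t)) = n choose (d - 1 + t)"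
        using lam by simp
    qed
    have all: "\<forall>i\<in>{1..n}. lambda_seq ?C es i = ?mu i"
      by (rule uniq) (use key mu_sum[OF assms] in auto)
    show "lambda_seq ?C es i = ?mu i"
    proof (cases "i \<in> {1..n}")
      case True then show ?thesis using all by blast
    next
      case False
      then have "{j\<in>{..<?L}. ?N j = i} = {}" using Nb by auto
      then show ?thesis using lam False assms by auto
    qed
  qed
qed

end
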